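(* For every contractor network and every $t\in\mathbb N$, $$d_{TV}\big(\pi,\Pr(\mathbf X^t\in\cdot)\big)\le n\,\|(\mathbf A\mathbf W)^t\|.$$ Consequently, if $G$ is a directed acyclic graph (no directed cycles, no self-loops) and $d>0$ is the maximum number of edges in a directed path of $G$, then $t_{\mathrm{mix}}(\epsilon)\le d$ for all $\epsilon>0$; and for a general contractor network, for every $\epsilon>0$, $$t_{\mathrm{mix}}(\epsilon)\le 2+\frac{2}{1-\|(\mathbf A\mathbf W)^2\|}\log\Big(\frac n\epsilon\Big).$$
   Context: A contractor network is a finite directed graph $G=(\mathcal V,\mathcal E)$ with $n=|\mathcal V|$ nodes, without multiple edges (self-loops and directed cycles allowed in general), in which every node has at least one incident edge. For $i\in\mathcal V$ let $\delta_{\mathrm{in}}(i)=\{j:(j,i)\in\mathcal E\}$ and $\delta_{\mathrm{out}}(i)=\{k:(i,k)\in\mathcal E\}$. A node $i$ is a pure principal if $\delta_{\mathrm{in}}(i)=\emptyset$, a pure obligee if $\delta_{\mathrm{out}}(i)=\emptyset$, and an intermediary otherwise. Each edge $(j,i)\in\mathcal E$ carries a weight $w_{ij}>0$; $w_{ij}=0$ if $(j,i)\notin\mathcal E$; for every $i$ with $\delta_{\mathrm{in}}(i)\neq\emptyset$, $\sum_{j\in\delta_{\mathrm{in}}(i)}w_{ij}=1$; $\mathbf W=(w_{ij})$. Risk scores: $r_i\in(0,1)$ if $i$ is not a pure obligee, $r_i=0$ for pure obligees. Propagation parameters: $\alpha_i=0$ for pure principals, $\alpha_i=1$ for pure obligees,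 $\alpha_i\in(0,1)$ for intermediaries; $\mathbf A=\mathrm{diag}(\alpha_i)$. Failure process $(\mathbf X^t)_{t\in\mathbb N}$ on $\{0,1\}^n$: independent $X_i^0\sim\mathrm{Bernoulli}(r_i)$; for $t\ge0$, conditionally on $(\mathbf X^0,\dots,\mathbf X^t)$ the $X_i^{t+1}$ are independent with $X_i^{t+1}\sim\mathrm{Bernoulli}\big((1-\alpha_i)r_i+\alpha_i\sum_{j\in\delta_{\mathrm{in}}(i)}w_{ij}X_j^t\big)$. This is a Markov chain whose law converges to a unique stationary distribution $\pi$ on $\{0,1\}^n$. For distributions $P,Q$ on $\{0,1\}^n$, $d_{TV}(P,Q)=\max_{S\subseteq\{0,1\}^n}|P(S)-Q(S)|$, and $t_{\mathrm{mix}}(\epsilon)=\inf\{t\ge0:d_{TV}(\pi,\Pr(\mathbf X^t\in\cdot))\le\epsilon\}$. $\|\mathbf M\|$ is the induced $\ell_\infty$ matrix norm (maximum absolute row sum). *)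

theory Defs
  imports "HOL-Probability.Probability"
begin

text \<open>An edge (j,i) in E means j -> i.
  Weights w i j (the entry w_ij of W), risk scores r i, propagation parameters alpha i.
  States of the failure process are functions nat => bool that are False outside 0..<n.\<close>

definition din :: "(nat \<times> nat) set \<Rightarrow> nat \<Rightarrow> nat set" where
  "din E i = {j. (j, i) \<in> E}"

definition dout :: "(nat \<times> nat) set \<Rightarrow> nat \<Rightarrow> nat set" where
  "dout E i = {k. (i, k) \<in> E}"

definition contractor_network ::
  "nat \<Rightarrow> (nat \<times> nat) set \<Rightarrow> (nat \<Rightarrow> nat \<Rightarrow> real) \<Rightarrow> (nat \<Rightarrow> real) \<Rightarrow> (nat \<Rightarrow> real) \<Rightarrow> bool" where
  "contractor_network n E w r alpha \<longleftrightarrow>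
     E \<subseteq> {..<n} \<times> {..<n} \<and>
     (\<forall>i<n. din E i \<noteq> {} \<or> dout E i \<noteq> {}) \<and>
     (\<forall>i<n. \<forall>j<n. ((j, i) \<in> E \<longrightarrow> w i j > 0) \<and> ((j, i) \<notin> E \<longrightarrow> w i j = 0)) \<and>
     (\<forall>i<n. din E i \<noteq> {} \<longrightarrow> (\<Sum>j\<in>din E i. w i j) = 1) \<and>
     (\<forall>i<n. dout E i \<noteq> {} \<longrightarrow> 0 < r i \<and> r i < 1) \<and>
     (\<forall>i<n. dout E i = {} \<longrightarrow> r i = 0) \<and>
     (\<forall>i<n. din E i = {} \<longrightarrow> alpha i = 0) \<and>
     (\<forall>i<n. dout E i = {} \<longrightarrow> alpha i = 1) \<and>
     (\<forall>i<n. din E i \<noteq> {} \<and> dout E i \<noteq> {} \<longrightarrow> 0 < alpha i \<and> alpha i < 1)"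

definition init_pmf :: "nat \<Rightarrow> (nat \<Rightarrow> real) \<Rightarrow> (nat \<Rightarrow> bool) pmf" where
  "init_pmf n r = Pi_pmf {..<n} False (\<lambda>i. bernoulli_pmf (r i))"

definition step_pmf ::
  "nat \<Rightarrow> (nat \<times> nat) set \<Rightarrow> (nat \<Rightarrow> nat \<Rightarrow> real) \<Rightarrow> (nat \<Rightarrow> real) \<Rightarrow> (nat \<Rightarrow> real)
     \<Rightarrow> (nat \<Rightarrow> bool) \<Rightarrow> (nat \<Rightarrow> bool) pmf" where
  "step_pmf n E w r alpha x = Pi_pmf {..<n} False
     (\<lambda>i. bernoulli_pmf ((1 - alpha i) * r i + alpha i * (\<Sum>j\<in>din E i. w i j * (if x j then 1 else 0))))"

primrec law ::
  "nat \<Rightarrow> (nat \<times> nat) set \<Rightarrow> (nat \<Rightarrow> nat \<Rightarrow> real) \<Rightarrow> (nat \<Rightarrow> real) \<Rightarrow> (nat \<Rightarrow> real)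
     \<Rightarrow> nat \<Rightarrow> (nat \<Rightarrow> bool) pmf" where
  "law n E w r alpha 0 = init_pmf n r"
| "law n E w r alpha (Suc t) = bind_pmf (law n E w r alpha t) (step_pmf n E w r alpha)"

definition stationary ::
  "nat \<Rightarrow> (nat \<times> nat) set \<Rightarrow> (nat \<Rightarrow> nat \<Rightarrow> real) \<Rightarrow> (nat \<Rightarrow> real) \<Rightarrow> (nat \<Rightarrow> real)
     \<Rightarrow> (nat \<Rightarrow> bool) pmf \<Rightarrow> bool" where
  "stationary n E w r alpha p \<longleftrightarrow> bind_pmf p (step_pmf n E w r alpha) = p"

definition dTV :: "'a pmf \<Rightarrow> 'a pmf \<Rightarrow> real" where
  "dTV P Q = (SUP S. \<bar>measure_pmf.prob P S - measure_pmf.prob Q S\<bar>)"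

text \<open>Mixing time; infimum of the empty set is +infinity.\<close>
definition tmix :: "'a pmf \<Rightarrow> (nat \<Rightarrow> 'a pmf) \<Rightarrow> real \<Rightarrow> ereal" where
  "tmix p X eps = Inf ((\<lambda>t. ereal (real t)) ` {t. dTV p (X t) \<le> eps})"

text \<open>n x n matrices as functions, indices < n.\<close>
definition AW :: "(nat \<Rightarrow> real) \<Rightarrow> (nat \<Rightarrow> nat \<Rightarrow> real) \<Rightarrow> nat \<Rightarrow> nat \<Rightarrow> real" where
  "AW alpha w i k = alpha i * w i k"

definition matmul :: "nat \<Rightarrow> (nat \<Rightarrow> nat \<Rightarrow> real) \<Rightarrow> (nat \<Rightarrow> nat \<Rightarrow> real) \<Rightarrow> nat \<Rightarrow> nat \<Rightarrow> real" where
  "matmul n M N i k = (\<Sum>j<n. M i j * N j k)"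

primrec matpow :: "nat \<Rightarrow> (nat \<Rightarrow> nat \<Rightarrow> real) \<Rightarrow> nat \<Rightarrow> nat \<Rightarrow> nat \<Rightarrow> real" where
  "matpow n M 0 = (\<lambda>i k. if i = k then 1 else 0)"
| "matpow n M (Suc t) = matmul n (matpow n M t) M"

text \<open>Induced l-infinity norm (maximum absolute row sum); 0 for n = 0.\<close>
definition mnorm :: "nat \<Rightarrow> (nat \<Rightarrow> nat \<Rightarrow> real) \<Rightarrow> real" where
  "mnorm n M = Max (insert 0 {(\<Sum>k<n. \<bar>M i k\<bar>) | i. i < n})"

definition has_path :: "(nat \<times> nat) set \<Rightarrow> nat \<Rightarrow> bool" where
  "has_path E k \<longleftrightarrow> (\<exists>p::nat list. length p = Suc k \<and> (\<forall>i<k. (p ! i, p ! Suc i) \<in> E))"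

end

theory Submission
  imports Defs
begin

lemma prob_bind_pmf:
  "measure_pmf.prob (bind_pmf M N) X = measure_pmf.expectation M (\<lambda>x. measure_pmf.prob (N x) X)"
proof -
  have "ennreal (measure_pmf.prob (bind_pmf M N) X) = emeasure (bind_pmf M N) X"
    by (simp add: measure_pmf.emeasure_eq_measure)
  also have "\<dots> = (\<integral>\<^sup>+x. emeasure (N x) X \<partial>M)"
    by (rule emeasure_bind_pmf)
  also have "\<dots> = (\<integral>\<^sup>+x. ennreal (measure_pmf.prob (N x) X) \<partial>M)"
    by (simp add: measure_pmf.emeasure_eq_measure)
  also have "\<dots> = ennreal (measure_pmf.expectation M (\<lambda>x. measure_pmf.prob (N x) X))"
    by (intro nn_integral_eq_integral measure_pmf.integrable_const_bound[where B=1]) auto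
  finally show ?thesis by (simp add: integral_nonneg_AE)
qed

definition cb :: "real \<Rightarrow> real \<Rightarrow> (bool \<times> bool) pmf" where
  "cb p q = bind_pmf (bernoulli_pmf p) (\<lambda>a. map_pmf (\<lambda>b. (a, b))
      (bernoulli_pmf (if a then min p q / p else (q - min p q) / (1 - p))))"

lemma cb_fst: "map_pmf fst (cb p q) = bernoulli_pmf p"
  unfolding cb_def map_bind_pmf by (simp add: map_pmf_comp bind_return_pmf')

lemma cb_prob_bern: assumes "0 \<le> p" "p \<le> 1" "0 \<le> q" "q \<le> 1"
  shows "measure_pmf.prob (cb p q) {z. snd z} = q"
    and "measure_pmf.prob (cb p q) {z. fst z \<noteq> snd z} = \<bar>p - q\<bar>"
proof -
  have b: "measure_pmf.prob (bernoulli_pmf x) A = (if True \<in> A then x else 0) + (if False \<in> A then 1 - x else 0)"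
    if "0 \<le> x" "x \<le> 1" for x A
  proof -
    have "measure_pmf.prob (bernoulli_pmf x) A = sum (pmf (bernoulli_pmf x)) A"
      by (rule measure_measure_pmf_finite) simp
    also have "\<dots> = sum (pmf (bernoulli_pmf x)) (A \<inter> {True}) + sum (pmf (bernoulli_pmf x)) (A \<inter> {False})"
      by (subst sum.union_disjoint[symmetric]) (auto intro!: sum.cong)
    also have "\<dots> = (if True \<in> A then x else 0) + (if False \<in> A then 1 - x else 0)"
      using that by (simp add: Int_insert_right)
    finally show ?thesis .
  qed
  have s1: "{b. snd (a,b)} = {True}" "{b. fst (a,b) \<noteq> snd (a,b)} = {\<not>a}" for a :: bool by auto
  have r1: "0 \<le> min p q / p" "min p q / p \<le> 1" using assms by (auto simp: divide_simps)
  have r2: "0 \<le> (q - min p q) / (1 - p)" "(q - min p q) / (1 - p) \<le> 1" using assms by (auto simp: divide_simps)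
  show "measure_pmf.prob (cb p q) {z. snd z} = q"
    unfolding cb_def prob_bind_pmf using assms r1 r2
    by (simp add: vimage_def s1 b)
  show "measure_pmf.prob (cb p q) {z. fst z \<noteq> snd z} = \<bar>p - q\<bar>"
    unfolding cb_def prob_bind_pmf using assms r1 r2
    apply (simp add: vimage_def s1 b)
    by (cases "p = 0") (auto simp: min_def algebra_simps)
qed

lemma cb_snd: assumes "0 \<le> p" "p \<le> 1" "0 \<le> q" "q \<le> 1"
  shows "map_pmf snd (cb p q) = bernoulli_pmf q"
proof (rule pmf_eqI)
  fix x :: bool
  have T: "measure_pmf.prob (cb p q) {z. snd z} = q" by (rule cb_prob_bern(1)[OF assms])
  have "measure_pmf.prob (cb p q) (snd -` {x}) = (if x then q else 1 - q)"
  proof (cases x)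
    case True
    then show ?thesis using T by (simp add: vimage_def)
  next
    case False
    have "snd -` {x} = UNIV - {z. snd z}" using False by auto
    then have "measure_pmf.prob (cb p q) (snd -` {x}) = 1 - measure_pmf.prob (cb p q) {z. snd z}"
      using measure_pmf.prob_compl[of "{z. snd z}" "cb p q"] by (metis sets_measure_pmf space_measure_pmf UNIV_I)
    then show ?thesis using T False by simp
  qed
  then show "pmf (map_pmf snd (cb p q)) x = pmf (bernoulli_pmf q) x"
    using assms by (simp add: pmf_map)
qed

definition cpair :: "nat \<Rightarrow> (nat \<Rightarrow> real) \<Rightarrow> (nat \<Rightarrow> real) \<Rightarrow> ((nat \<Rightarrow> bool) \<times> (nat \<Rightarrow> bool)) pmf" where
  "cpair n a b = map_pmf (\<lambda>f. (fst \<circ> f, snd \<circ> f)) (Pi_pmf {..<n} (False, False) (\<lambda>i. cb (a i) (b i)))"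

lemma cpair_fst: "map_pmf fst (cpair n a b) = Pi_pmf {..<n} False (\<lambda>i. bernoulli_pmf (a i))"
proof -
  have "map_pmf fst (cpair n a b) = map_pmf (\<lambda>f. fst \<circ> f) (Pi_pmf {..<n} (False, False) (\<lambda>i. cb (a i) (b i)))"
    unfolding cpair_def by (simp add: map_pmf_comp)
  also have "\<dots> = Pi_pmf {..<n} False (\<lambda>i. map_pmf fst (cb (a i) (b i)))"
    by (rule Pi_pmf_map[symmetric]) auto
  also have "\<dots> = Pi_pmf {..<n} False (\<lambda>i. bernoulli_pmf (a i))"
    by (simp add: cb_fst)
  finally show ?thesis .
qed

lemma cpair_snd: assumes "\<And>i. i < n \<Longrightarrow> 0 \<le> a i \<and> a i \<le> 1 \<and> 0 \<le> b i \<and> b i \<le> 1"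
  shows "map_pmf snd (cpair n a b) = Pi_pmf {..<n} False (\<lambda>i. bernoulli_pmf (b i))"
proof -
  have "map_pmf snd (cpair n a b) = map_pmf (\<lambda>f. snd \<circ> f) (Pi_pmf {..<n} (False, False) (\<lambda>i. cb (a i) (b i)))"
    unfolding cpair_def by (simp add: map_pmf_comp)
  also have "\<dots> = Pi_pmf {..<n} False (\<lambda>i. map_pmf snd (cb (a i) (b i)))"
    by (rule Pi_pmf_map[symmetric]) auto
  also have "\<dots> = Pi_pmf {..<n} False (\<lambda>i. bernoulli_pmf (b i))"
    by (rule Pi_pmf_cong) (use assms cb_snd in auto)
  finally show ?thesis .
qed

lemma cpair_diff: assumes "i < n" "0 \<le> a i" "a i \<le> 1" "0 \<le> b i" "b i \<le> 1"
  shows "measure_pmf.prob (cpair n a b) {z. fst z i \<noteq> snd z i} = \<bar>a i - b i\<bar>"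
proof -
  have "measure_pmf.prob (cpair n a b) {z. fst z i \<noteq> snd z i}
      = measure_pmf.prob (Pi_pmf {..<n} (False, False) (\<lambda>i. cb (a i) (b i))) ((\<lambda>f. f i) -` {z. fst z \<noteq> snd z})"
    unfolding cpair_def by (simp add: vimage_def)
  also have "\<dots> = measure_pmf.prob (map_pmf (\<lambda>f. f i) (Pi_pmf {..<n} (False, False) (\<lambda>i. cb (a i) (b i)))) {z. fst z \<noteq> snd z}"
    by simp
  also have "\<dots> = measure_pmf.prob (cb (a i) (b i)) {z. fst z \<noteq> snd z}"
    using assms(1) by (simp add: Pi_pmf_component)
  also have "\<dots> = \<bar>a i - b i\<bar>" by (rule cb_prob_bern(2)) (use assms in auto)
  finally show ?thesis .
qed

lemma cpair_set: "set_pmf (cpair n a b) \<subseteq> {z. \<forall>i. n \<le> i \<longrightarrow> \<not> fst z i \<and> \<not> snd z i}"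
  unfolding cpair_def using set_Pi_pmf_subset[of "{..<n}" "(False, False)" "\<lambda>i. cb (a i) (b i)"]
  by auto

definition pf :: "(nat \<times> nat) set \<Rightarrow> (nat \<Rightarrow> nat \<Rightarrow> real) \<Rightarrow> (nat \<Rightarrow> real) \<Rightarrow> (nat \<Rightarrow> real)
    \<Rightarrow> (nat \<Rightarrow> bool) \<Rightarrow> nat \<Rightarrow> real" where
  "pf E w r alpha x i = (1 - alpha i) * r i + alpha i * (\<Sum>j\<in>din E i. w i j * (if x j then 1 else 0))"

primrec cl :: "nat \<Rightarrow> (nat \<times> nat) set \<Rightarrow> (nat \<Rightarrow> nat \<Rightarrow> real) \<Rightarrow> (nat \<Rightarrow> real) \<Rightarrow> (nat \<Rightarrow> real)
    \<Rightarrow> (nat \<Rightarrow> bool) pmf \<Rightarrow> nat \<Rightarrow> ((nat \<Rightarrow> bool) \<times> (nat \<Rightarrow> bool)) pmf" where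
  "cl n E w r alpha p 0 = bind_pmf p (\<lambda>x. cpair n (pf E w r alpha x) r)"
| "cl n E w r alpha p (Suc t) = bind_pmf (cl n E w r alpha p t)
      (\<lambda>z. cpair n (pf E w r alpha (fst z)) (pf E w r alpha (snd z)))"

locale cnet =
  fixes n :: nat and E :: "(nat \<times> nat) set" and w :: "nat \<Rightarrow> nat \<Rightarrow> real"
    and r alpha :: "nat \<Rightarrow> real" and p :: "(nat \<Rightarrow> bool) pmf"
  assumes cn: "contractor_network n E w r alpha"
    and st: "stationary n E w r alpha p"
begin

abbreviation "P \<equiv> pf E w r alpha"
abbreviation "C \<equiv> cl n E w r alpha p"
abbreviation "e t i \<equiv> measure_pmf.prob (C t) {z. fst z i \<noteq> snd z i}"

lemma cnD:
  "E \<subseteq> {..<n} \<times> {..<n}"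
  "\<And>i j. i<n \<Longrightarrow> j<n \<Longrightarrow> (j, i) \<in> E \<Longrightarrow> w i j > 0"
  "\<And>i j. i<n \<Longrightarrow> j<n \<Longrightarrow> (j, i) \<notin> E \<Longrightarrow> w i j = 0"
  "\<And>i. i<n \<Longrightarrow> din E i \<noteq> {} \<Longrightarrow> (\<Sum>j\<in>din E i. w i j) = 1"
  "\<And>i. i<n \<Longrightarrow> dout E i \<noteq> {} \<Longrightarrow> 0 < r i \<and> r i < 1"
  "\<And>i. i<n \<Longrightarrow> dout E i = {} \<Longrightarrow> r i = 0"
  "\<And>i. i<n \<Longrightarrow> din E i = {} \<Longrightarrow> alpha i = 0"
  "\<And>i. i<n \<Longrightarrow> dout E i = {} \<Longrightarrow> alpha i = 1"
  "\<And>i. i<n \<Longrightarrow> din E i \<noteq> {} \<Longrightarrow> dout E i \<noteq> {} \<Longrightarrow> 0 < alpha i \<and> alpha i < 1"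
proof -
  note c = cn[unfolded contractor_network_def]
  note c2 = c[THEN conjunct2, THEN conjunct2]
  note c3 = c2[THEN conjunct2]
  note c4 = c3[THEN conjunct2]
  note c5 = c4[THEN conjunct2]
  note c6 = c5[THEN conjunct2]
  note c7 = c6[THEN conjunct2]
  note c8 = c7[THEN conjunct2]
  show "E \<subseteq> {..<n} \<times> {..<n}" using c by (rule conjunct1)
  show "\<And>i j. i<n \<Longrightarrow> j<n \<Longrightarrow> (j, i) \<in> E \<Longrightarrow> w i j > 0"
    using c2[THEN conjunct1] by simp
  show "\<And>i j. i<n \<Longrightarrow> j<n \<Longrightarrow> (j, i) \<notin> E \<Longrightarrow> w i j = 0"
    using c2[THEN conjunct1] by simp
  show "\<And>i. i<n \<Longrightarrow> din E i \<noteq> {} \<Longrightarrow> (\<Sum>j\<in>din E i. w i j) = 1"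
    using c3[THEN conjunct1] by simp
  show "\<And>i. i<n \<Longrightarrow> dout E i \<noteq> {} \<Longrightarrow> 0 < r i \<and> r i < 1"
    using c4[THEN conjunct1] by simp
  show "\<And>i. i<n \<Longrightarrow> dout E i = {} \<Longrightarrow> r i = 0"
    using c5[THEN conjunct1] by simp
  show "\<And>i. i<n \<Longrightarrow> din E i = {} \<Longrightarrow> alpha i = 0"
    using c6[THEN conjunct1] by simp
  show "\<And>i. i<n \<Longrightarrow> dout E i = {} \<Longrightarrow> alpha i = 1"
    using c7[THEN conjunct1] by simp
  show "\<And>i. i<n \<Longrightarrow> din E i \<noteq> {} \<Longrightarrow> dout E i \<noteq> {} \<Longrightarrow> 0 < alpha i \<and> alpha i < 1"
    using c8 by simp
qed

lemma E_sub: "E \<subseteq> {..<n} \<times> {..<n}" by (rule cnD(1))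

lemma din_sub: "din E i \<subseteq> {..<n}" using E_sub unfolding din_def by auto

lemma fin_din: "finite (din E i)" using din_sub finite_subset by blast

lemma w_pos: "(j, i) \<in> E \<Longrightarrow> w i j > 0" using cnD(2) E_sub by blast

lemma w_zero: "i < n \<Longrightarrow> j < n \<Longrightarrow> (j, i) \<notin> E \<Longrightarrow> w i j = 0"
  by (rule cnD(3))

lemma w_nonneg: "i < n \<Longrightarrow> j < n \<Longrightarrow> 0 \<le> w i j"
  using w_pos w_zero by (metis less_imp_le order_refl)

lemma w_sum: "i < n \<Longrightarrow> din E i \<noteq> {} \<Longrightarrow> (\<Sum>j\<in>din E i. w i j) = 1"
  by (rule cnD(4))

lemma r_range: "i < n \<Longrightarrow> 0 \<le> r i \<and> r i \<le> 1"
  using cnD(5)[of i] cnD(6)[of i] by (cases "dout E i = {}") auto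

lemma alpha_range: "i < n \<Longrightarrow> 0 \<le> alpha i \<and> alpha i \<le> 1"
  using cnD(7)[of i] cnD(8)[of i] cnD(9)[of i]
  by (cases "dout E i = {}"; cases "din E i = {}") auto

lemma alpha_princ: "i < n \<Longrightarrow> din E i = {} \<Longrightarrow> alpha i = 0"
  by (rule cnD(7))

lemma alpha_lt1: "(j, i) \<in> E \<Longrightarrow> alpha j < 1"
proof -
  assume a: "(j, i) \<in> E"
  then have j: "j < n" using E_sub by auto
  have "dout E j \<noteq> {}" using a unfolding dout_def by auto
  then show ?thesis using cnD(7)[OF j] cnD(9)[OF j] by (cases "din E j = {}") auto
qed

lemma S_range: "i < n \<Longrightarrow> 0 \<le> (\<Sum>j\<in>din E i. w i j * (if x j then 1 else 0))
   \<and> (\<Sum>j\<in>din E i. w i j * (if x j then 1 else 0)) \<le> (1::real)"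
proof -
  assume i: "i < n"
  have wn: "j \<in> din E i \<Longrightarrow> 0 \<le> w i j" for j using w_pos unfolding din_def by force
  have "0 \<le> (\<Sum>j\<in>din E i. w i j * (if x j then 1 else 0))"
    by (rule sum_nonneg) (use wn in auto)
  moreover have "(\<Sum>j\<in>din E i. w i j * (if x j then 1 else 0)) \<le> (\<Sum>j\<in>din E i. w i j)"
    by (rule sum_mono) (use wn in auto)
  moreover have "(\<Sum>j\<in>din E i. w i j) \<le> 1"
    using w_sum[OF i] by (cases "din E i = {}") auto
  ultimately show ?thesis by linarith
qed

lemma pf_range: "i < n \<Longrightarrow> 0 \<le> P x i \<and> P x i \<le> 1"
proof -
  assume i: "i < n"
  define S where "S = (\<Sum>j\<in>din E i. w i j * (if x j then 1 else 0))"
  have S: "0 \<le> S" "S \<le> 1" using S_range[OF i, of x] unfolding S_def by auto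
  have a: "0 \<le> alpha i" "alpha i \<le> 1" using alpha_range[OF i] by auto
  have rr: "0 \<le> r i" "r i \<le> 1" using r_range[OF i] by auto
  have "P x i = (1 - alpha i) * r i + alpha i * S" unfolding pf_def S_def by simp
  moreover have "0 \<le> (1 - alpha i) * r i + alpha i * S" using a rr S by simp
  moreover have "(1 - alpha i) * r i + alpha i * S \<le> (1 - alpha i) * 1 + alpha i * 1"
    using a rr S by (intro add_mono mult_left_mono) auto
  ultimately show ?thesis by simp
qed

lemma step_eq: "step_pmf n E w r alpha x = Pi_pmf {..<n} False (\<lambda>i. bernoulli_pmf (P x i))"
  unfolding step_pmf_def pf_def by simp

lemma step_eq': "step_pmf n E w r alpha = (\<lambda>x. Pi_pmf {..<n} False (\<lambda>i. bernoulli_pmf (P x i)))"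
  by (rule ext) (rule step_eq)

lemma stat: "bind_pmf p (\<lambda>x. Pi_pmf {..<n} False (\<lambda>i. bernoulli_pmf (P x i))) = p"
  using st unfolding stationary_def step_eq by simp

lemma C_fst: "map_pmf fst (C t) = p"
proof (induction t)
  case 0
  then show ?case by (simp add: map_bind_pmf cpair_fst stat)
next
  case (Suc t)
  have "map_pmf fst (C (Suc t)) = bind_pmf (C t) (\<lambda>z. Pi_pmf {..<n} False (\<lambda>i. bernoulli_pmf (P (fst z) i)))"
    by (simp add: map_bind_pmf cpair_fst)
  also have "\<dots> = bind_pmf (map_pmf fst (C t)) (\<lambda>x. Pi_pmf {..<n} False (\<lambda>i. bernoulli_pmf (P x i)))"
    by (simp add: bind_map_pmf)
  also have "\<dots> = p" using Suc stat by simp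
  finally show ?case .
qed

lemma C_snd: "map_pmf snd (C t) = law n E w r alpha t"
proof (induction t)
  case 0
  have "map_pmf snd (C 0) = bind_pmf p (\<lambda>x. Pi_pmf {..<n} False (\<lambda>i. bernoulli_pmf (r i)))"
    by (simp add: map_bind_pmf cpair_snd pf_range r_range)
  then show ?case by (simp add: init_pmf_def)
next
  case (Suc t)
  have "map_pmf snd (C (Suc t)) = bind_pmf (C t) (\<lambda>z. Pi_pmf {..<n} False (\<lambda>i. bernoulli_pmf (P (snd z) i)))"
    by (simp add: map_bind_pmf cpair_snd pf_range)
  also have "\<dots> = bind_pmf (map_pmf snd (C t)) (\<lambda>x. Pi_pmf {..<n} False (\<lambda>i. bernoulli_pmf (P x i)))"
    by (simp add: bind_map_pmf)
  also have "\<dots> = law n E w r alpha (Suc t)" using Suc by (simp add: step_eq')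
  finally show ?case .
qed

lemma C_set: "set_pmf (C t) \<subseteq> {z. \<forall>i. n \<le> i \<longrightarrow> \<not> fst z i \<and> \<not> snd z i}"
  by (cases t) (auto dest!: subsetD[OF cpair_set])

end

lemma matmul_id_right: "k < n \<Longrightarrow> matmul n A (\<lambda>i k. if i = k then 1 else 0) i k = A i k"
  unfolding matmul_def by (simp add: if_distrib cong: if_cong)

lemma matpow_one: "i < n \<Longrightarrow> matpow n M (Suc 0) i k = M i k"
proof -
  assume i: "i < n"
  have "matpow n M (Suc 0) i k = (\<Sum>j<n. (if i = j then M j k else 0))"
    unfolding matpow.simps matmul_def by (intro sum.cong) auto
  also have "\<dots> = M i k" using i by (simp add: sum.delta)
  finally show ?thesis .
qed

lemma matpow_add: "i < n \<Longrightarrow> k < n \<Longrightarrow> matpow n M (a + b) i k = matmul n (matpow n M a) (matpow n M b) i k"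
proof (induction b arbitrary: k)
  case 0
  then show ?case by (simp add: matmul_id_right)
next
  case (Suc b)
  have "matpow n M (a + Suc b) i k = (\<Sum>j<n. matpow n M (a + b) i j * M j k)"
    by (simp add: matmul_def)
  also have "\<dots> = (\<Sum>j<n. (\<Sum>l<n. matpow n M a i l * matpow n M b l j) * M j k)"
    using Suc.IH Suc.prems by (simp add: matmul_def)
  also have "\<dots> = (\<Sum>l<n. matpow n M a i l * (\<Sum>j<n. matpow n M b l j * M j k))"
  proof -
    have "(\<Sum>j<n. (\<Sum>l<n. matpow n M a i l * matpow n M b l j) * M j k)
        = (\<Sum>j<n. \<Sum>l<n. matpow n M a i l * matpow n M b l j * M j k)"
      by (simp only: sum_distrib_right)
    also have "\<dots> = (\<Sum>l<n. \<Sum>j<n. matpow n M a i l * matpow n M b l j * M j k)"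
      by (rule sum.swap)
    also have "\<dots> = (\<Sum>l<n. matpow n M a i l * (\<Sum>j<n. matpow n M b l j * M j k))"
      by (simp only: sum_distrib_left mult.assoc)
    finally show ?thesis .
  qed
  also have "\<dots> = matmul n (matpow n M a) (matpow n M (Suc b)) i k"
    by (simp add: matmul_def)
  finally show ?case .
qed

lemma matpow_Suc_left: "i < n \<Longrightarrow> k < n \<Longrightarrow> matpow n M (Suc t) i k = (\<Sum>j<n. M i j * matpow n M t j k)"
  using matpow_add[of i n k M "Suc 0" t] by (simp add: matmul_def matpow_one del: matpow.simps)

lemma bint: "(\<And>x. \<bar>f x\<bar> \<le> B) \<Longrightarrow> integrable (measure_pmf M) (f :: 'a \<Rightarrow> real)"
  by (intro measure_pmf.integrable_const_bound[where B=B]) auto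

context cnet begin

lemma P_princ: "i < n \<Longrightarrow> din E i = {} \<Longrightarrow> P x i = r i"
  unfolding pf_def using alpha_princ by simp

lemma e0_princ: assumes "i < n" "din E i = {}" shows "e 0 i = 0"
proof -
  have "e 0 i = measure_pmf.expectation p (\<lambda>x. measure_pmf.prob (cpair n (P x) r) {z. fst z i \<noteq> snd z i})"
    by (simp add: prob_bind_pmf)
  also have "\<dots> = measure_pmf.expectation p (\<lambda>x. 0)"
    by (intro Bochner_Integration.integral_cong refl)
       (use cpair_diff[OF assms(1)] pf_range[OF assms(1)] r_range[OF assms(1)] P_princ[OF assms] in simp)
  finally show ?thesis by simp
qed

lemma AW_nonneg: "i < n \<Longrightarrow> j < n \<Longrightarrow> 0 \<le> AW alpha w i j"
  unfolding AW_def using alpha_range w_nonneg by simp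

lemma P_diff: assumes i: "i < n"
  shows "\<bar>P x i - P y i\<bar> \<le> (\<Sum>j<n. AW alpha w i j * indicator {z. fst z j \<noteq> snd z j} (x, y))"
proof -
  let ?d = "\<lambda>j. (if x j then 1 else 0) - (if y j then 1 else (0::real))"
  let ?I = "\<lambda>j. indicator {z. fst z j \<noteq> snd z j} (x, y) :: real"
  have a: "0 \<le> alpha i" using alpha_range[OF i] by simp
  have wn: "j \<in> din E i \<Longrightarrow> 0 \<le> w i j" for j using w_pos unfolding din_def by force
  have s1: "(\<Sum>j\<in>din E i. w i j * ?d j) = (\<Sum>j\<in>din E i. w i j * (if x j then 1 else 0)) - (\<Sum>j\<in>din E i. w i j * (if y j then 1 else 0))"
    by (simp add: sum_subtractf[symmetric] right_diff_distrib)
  have "P x i - P y i = alpha i * (\<Sum>j\<in>din E i. w i j * ?d j)"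
    unfolding pf_def s1 by (simp add: algebra_simps)
  then have "\<bar>P x i - P y i\<bar> = alpha i * \<bar>\<Sum>j\<in>din E i. w i j * ?d j\<bar>"
    using a by (simp add: abs_mult)
  also have "\<dots> \<le> alpha i * (\<Sum>j\<in>din E i. w i j * ?I j)"
  proof (intro mult_left_mono a)
    have "\<bar>\<Sum>j\<in>din E i. w i j * ?d j\<bar> \<le> (\<Sum>j\<in>din E i. \<bar>w i j * ?d j\<bar>)"
      by (rule sum_abs)
    also have "\<dots> \<le> (\<Sum>j\<in>din E i. w i j * ?I j)"
      by (intro sum_mono) (use wn in \<open>auto simp: abs_mult indicator_def\<close>)
    finally show "\<bar>\<Sum>j\<in>din E i. w i j * ?d j\<bar> \<le> (\<Sum>j\<in>din E i. w i j * ?I j)" .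
  qed
  also have "(\<Sum>j\<in>din E i. w i j * ?I j) = (\<Sum>j<n. w i j * ?I j)"
    by (rule sum.mono_neutral_left) (use din_sub w_zero i in \<open>auto simp: din_def\<close>)
  also have "alpha i * \<dots> = (\<Sum>j<n. AW alpha w i j * ?I j)"
    by (simp only: sum_distrib_left AW_def mult.assoc)
  finally show ?thesis .
qed

lemma e_Suc: assumes i: "i < n" shows "e (Suc t) i \<le> (\<Sum>j<n. AW alpha w i j * e t j)"
proof -
  let ?I = "\<lambda>j z. indicator {z. fst z j \<noteq> snd z j} z :: real"
  have "e (Suc t) i = measure_pmf.expectation (C t) (\<lambda>z. measure_pmf.prob (cpair n (P (fst z)) (P (snd z))) {z. fst z i \<noteq> snd z i})"
    by (simp add: prob_bind_pmf)
  also have "\<dots> = measure_pmf.expectation (C t) (\<lambda>z. \<bar>P (fst z) i - P (snd z) i\<bar>)"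
    by (intro Bochner_Integration.integral_cong refl)
       (use cpair_diff[OF assms(1)] pf_range[OF assms(1)] in simp)
  also have "\<dots> \<le> measure_pmf.expectation (C t) (\<lambda>z. \<Sum>j<n. AW alpha w i j * ?I j z)"
  proof (rule integral_mono)
    show "integrable (measure_pmf (C t)) (\<lambda>z. \<bar>P (fst z) i - P (snd z) i\<bar>)"
    proof (rule bint[where B=1])
      fix z :: "(nat \<Rightarrow> bool) \<times> (nat \<Rightarrow> bool)"
      show "\<bar>\<bar>P (fst z) i - P (snd z) i\<bar>\<bar> \<le> 1"
      proof -
        have "0 \<le> P (fst z) i" "P (fst z) i \<le> 1" "0 \<le> P (snd z) i" "P (snd z) i \<le> 1"
          using pf_range[OF i, of "fst z"] pf_range[OF i, of "snd z"] by auto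
        then have "\<bar>P (fst z) i - P (snd z) i\<bar> \<le> 1" by (intro abs_leI) linarith+
        then show ?thesis by (simp only: abs_abs)
      qed
    qed
    show "integrable (measure_pmf (C t)) (\<lambda>z. \<Sum>j<n. AW alpha w i j * ?I j z)"
      by (intro Bochner_Integration.integrable_sum integrable_mult_right bint[where B=1])
         (auto simp: indicator_def)
    fix z :: "(nat \<Rightarrow> bool) \<times> (nat \<Rightarrow> bool)"
    show "\<bar>P (fst z) i - P (snd z) i\<bar> \<le> (\<Sum>j<n. AW alpha w i j * ?I j z)"
      using P_diff[OF i, of "fst z" "snd z"] by (simp only: prod.collapse)
  qed
  also have "\<dots> = (\<Sum>j<n. AW alpha w i j * e t j)"
  proof (subst Bochner_Integration.integral_sum)
    show "integrable (measure_pmf (C t)) (\<lambda>z. AW alpha w i j * ?I j z)" if "j \<in> {..<n}" for j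
      by (intro integrable_mult_right bint[where B=1]) (simp add: indicator_def)
    show "(\<Sum>j<n. measure_pmf.expectation (C t) (\<lambda>z. AW alpha w i j * ?I j z)) = (\<Sum>j<n. AW alpha w i j * e t j)"
    proof (rule sum.cong[OF refl])
      fix j
      have "measure_pmf.expectation (C t) (\<lambda>z. AW alpha w i j * ?I j z) = AW alpha w i j * measure_pmf.expectation (C t) (?I j)"
        by (rule Bochner_Integration.integral_mult_right_zero)
      also have "measure_pmf.expectation (C t) (?I j) = e t j"
        using Bochner_Integration.integral_indicator[of "measure_pmf (C t)" "{z. fst z j \<noteq> snd z j}"] by simp
      finally show "measure_pmf.expectation (C t) (\<lambda>z. AW alpha w i j * ?I j z) = AW alpha w i j * e t j" .
    qed
  qed
  finally show ?thesis .
qed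


lemma e_bound: "i < n \<Longrightarrow> e t i \<le> (\<Sum>k<n. matpow n (AW alpha w) t i k * e 0 k)"
proof (induction t arbitrary: i)
  case 0
  have "(\<Sum>k<n. matpow n (AW alpha w) 0 i k * e 0 k) = (\<Sum>k<n. if i = k then e 0 k else 0)"
    by (intro sum.cong) auto
  also have "\<dots> = e 0 i" using 0 by (simp add: sum.delta)
  finally show ?case by simp
next
  case (Suc t)
  let ?M = "AW alpha w"
  have "e (Suc t) i \<le> (\<Sum>j<n. ?M i j * e t j)" by (rule e_Suc[OF Suc.prems])
  also have "\<dots> \<le> (\<Sum>j<n. ?M i j * (\<Sum>k<n. matpow n ?M t j k * e 0 k))"
    by (intro sum_mono mult_left_mono Suc.IH) (use AW_nonneg Suc.prems in auto)
  also have "\<dots> = (\<Sum>j<n. \<Sum>k<n. ?M i j * matpow n ?M t j k * e 0 k)"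
    by (simp only: sum_distrib_left mult.assoc)
  also have "\<dots> = (\<Sum>k<n. \<Sum>j<n. ?M i j * matpow n ?M t j k * e 0 k)"
    by (rule sum.swap)
  also have "\<dots> = (\<Sum>k<n. (\<Sum>j<n. ?M i j * matpow n ?M t j k) * e 0 k)"
    by (simp only: sum_distrib_right)
  also have "\<dots> = (\<Sum>k<n. matpow n ?M (Suc t) i k * e 0 k)"
    by (intro sum.cong refl) (use matpow_Suc_left[OF Suc.prems] in simp)
  finally show ?case .
qed

lemma dTV_bound: "dTV p (law n E w r alpha t) \<le> (\<Sum>i<n. e t i)"
  unfolding dTV_def
proof (rule cSUP_least)
  show "UNIV \<noteq> {}" by simp
  fix S :: "(nat \<Rightarrow> bool) set"
  let ?D = "{z :: (nat \<Rightarrow> bool) \<times> (nat \<Rightarrow> bool). fst z \<noteq> snd z}"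
  have A: "measure_pmf.prob p S = measure_pmf.prob (C t) (fst -` S)"
    using C_fst[of t] by (metis measure_map_pmf)
  have B: "measure_pmf.prob (law n E w r alpha t) S = measure_pmf.prob (C t) (snd -` S)"
    using C_snd[of t] by (metis measure_map_pmf)
  have U: "measure_pmf.prob (C t) X \<le> measure_pmf.prob (C t) Y + measure_pmf.prob (C t) ?D"
    if "X \<subseteq> Y \<union> ?D" for X Y
  proof -
    have "measure_pmf.prob (C t) X \<le> measure_pmf.prob (C t) (Y \<union> ?D)"
      by (rule measure_pmf.finite_measure_mono) (use that in auto)
    also have "\<dots> \<le> measure_pmf.prob (C t) Y + measure_pmf.prob (C t) ?D"
      by (rule measure_Un_le) auto
    finally show ?thesis .
  qed
  have U1: "measure_pmf.prob (C t) (fst -` S) \<le> measure_pmf.prob (C t) (snd -` S) + measure_pmf.prob (C t) ?D"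
    by (rule U) auto
  have U2: "measure_pmf.prob (C t) (snd -` S) \<le> measure_pmf.prob (C t) (fst -` S) + measure_pmf.prob (C t) ?D"
    by (rule U) auto
  have "measure_pmf.prob (C t) ?D = measure_pmf.prob (C t) (?D \<inter> set_pmf (C t))"
    by (simp add: measure_Int_set_pmf)
  also have "\<dots> \<le> measure_pmf.prob (C t) (\<Union>i\<in>{..<n}. {z. fst z i \<noteq> snd z i})"
  proof (rule measure_pmf.finite_measure_mono)
    show "?D \<inter> set_pmf (C t) \<subseteq> (\<Union>i\<in>{..<n}. {z. fst z i \<noteq> snd z i})"
    proof
      fix z assume z: "z \<in> ?D \<inter> set_pmf (C t)"
      then obtain i where i: "fst z i \<noteq> snd z i" by (auto simp: fun_eq_iff)
      have "i < n" using z i C_set[of t] by (metis (mono_tags, lifting) IntD2 mem_Collect_eq not_le subsetD)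
      then show "z \<in> (\<Union>i\<in>{..<n}. {z. fst z i \<noteq> snd z i})" using i by auto
    qed
  qed auto
  also have "\<dots> \<le> (\<Sum>i<n. e t i)"
    by (rule measure_pmf.finite_measure_subadditive_finite) auto
  finally have "measure_pmf.prob (C t) ?D \<le> (\<Sum>i<n. e t i)" .
  then show "\<bar>measure_pmf.prob p S - measure_pmf.prob (law n E w r alpha t) S\<bar> \<le> (\<Sum>i<n. e t i)"
    unfolding A B using U1 U2 by linarith
qed

lemma walk: "i < n \<Longrightarrow> k < n \<Longrightarrow> matpow n (AW alpha w) t i k \<noteq> 0 \<Longrightarrow>
   \<exists>q. length q = Suc t \<and> q ! 0 = k \<and> q ! t = i \<and> (\<forall>s<t. (q ! s, q ! Suc s) \<in> E)"
proof (induction t arbitrary: i)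
  case 0
  then show ?case by (intro exI[of _ "[k]"]) (auto split: if_splits)
next
  case (Suc t)
  have "(\<Sum>j<n. AW alpha w i j * matpow n (AW alpha w) t j k) \<noteq> 0"
    using Suc.prems matpow_Suc_left[of i n k "AW alpha w" t] by simp
  then obtain j where j: "j < n" "AW alpha w i j \<noteq> 0" "matpow n (AW alpha w) t j k \<noteq> 0"
    by (metis (no_types, lifting) lessThan_iff mult_eq_0_iff sum.neutral)
  obtain q where q: "length q = Suc t" "q ! 0 = k" "q ! t = j" "\<forall>s<t. (q ! s, q ! Suc s) \<in> E"
    using Suc.IH[OF j(1) Suc.prems(2) j(3)] by blast
  have e: "(j, i) \<in> E" using j(2) w_zero[OF Suc.prems(1) j(1)] unfolding AW_def by auto
  define q' where "q' = q @ [i]"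
  have "length q' = Suc (Suc t)" "q' ! 0 = k" "q' ! Suc t = i"
    using q unfolding q'_def by (auto simp: nth_append)
  moreover have "\<forall>s<Suc t. (q' ! s, q' ! Suc s) \<in> E"
  proof (intro allI impI)
    fix s assume s: "s < Suc t"
    show "(q' ! s, q' ! Suc s) \<in> E"
    proof (cases "s < t")
      case True
      then show ?thesis using q unfolding q'_def by (auto simp: nth_append)
    next
      case False
      then have "s = t" using s by simp
      then show ?thesis using q e unfolding q'_def by (auto simp: nth_append)
    qed
  qed
  ultimately show ?case by blast
qed

end

lemma mnorm_fin: "finite {(\<Sum>k<n. \<bar>M i k\<bar>) | i. i < (n::nat)}" for M :: "nat \<Rightarrow> nat \<Rightarrow> real"
proof -
  have "{(\<Sum>k<n. \<bar>M i k\<bar>) | i. i < n} = (\<lambda>i. \<Sum>k<n. \<bar>M i k\<bar>) ` {..<n}" by auto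
  then show ?thesis by simp
qed

lemma row_le_mnorm: "i < n \<Longrightarrow> (\<Sum>k<n. \<bar>M i k\<bar>) \<le> mnorm n M"
  unfolding mnorm_def by (rule Max_ge) (use mnorm_fin in auto)

lemma mnorm_nonneg: "0 \<le> mnorm n M"
  unfolding mnorm_def by (rule Max_ge) (use mnorm_fin in auto)

lemma mnorm_le: "(\<And>i. i < n \<Longrightarrow> (\<Sum>k<n. \<bar>M i k\<bar>) \<le> c) \<Longrightarrow> 0 \<le> c \<Longrightarrow> mnorm n M \<le> c"
  unfolding mnorm_def using mnorm_fin[of M n] by (subst Max_le_iff) auto

lemma mnorm_lt: "(\<And>i. i < n \<Longrightarrow> (\<Sum>k<n. \<bar>M i k\<bar>) < c) \<Longrightarrow> 0 < c \<Longrightarrow> mnorm n M < c"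
  unfolding mnorm_def using mnorm_fin[of M n] by (subst Max_less_iff) auto

lemma mnorm_img: "mnorm n M = Max (insert 0 ((\<lambda>i. \<Sum>k<n. \<bar>M i k\<bar>) ` {..<n}))"
proof -
  have "{(\<Sum>k<n. \<bar>M i k\<bar>) | i. i < n} = (\<lambda>i. \<Sum>k<n. \<bar>M i k\<bar>) ` {..<n}" by auto
  then show ?thesis unfolding mnorm_def by simp
qed

lemma mnorm_cong: "(\<And>i k. i < n \<Longrightarrow> k < n \<Longrightarrow> A i k = B i k) \<Longrightarrow> mnorm n A = mnorm n B"
  unfolding mnorm_img by (intro arg_cong[where f=Max] arg_cong[where f="insert 0"] image_cong sum.cong refl) auto

lemma mnorm_mul: "mnorm n (matmul n A B) \<le> mnorm n A * mnorm n B"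
proof (rule mnorm_le)
  show "0 \<le> mnorm n A * mnorm n B" by (simp add: mnorm_nonneg)
  fix i assume i: "i < n"
  have "(\<Sum>k<n. \<bar>matmul n A B i k\<bar>) \<le> (\<Sum>k<n. \<Sum>j<n. \<bar>A i j\<bar> * \<bar>B j k\<bar>)"
    unfolding matmul_def by (intro sum_mono order_trans[OF sum_abs]) (simp add: abs_mult)
  also have "\<dots> = (\<Sum>j<n. \<Sum>k<n. \<bar>A i j\<bar> * \<bar>B j k\<bar>)"
    by (rule sum.swap)
  also have "\<dots> = (\<Sum>j<n. \<bar>A i j\<bar> * (\<Sum>k<n. \<bar>B j k\<bar>))"
    by (simp only: sum_distrib_left)
  also have "\<dots> \<le> (\<Sum>j<n. \<bar>A i j\<bar> * mnorm n B)"
    by (intro sum_mono mult_left_mono row_le_mnorm) auto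
  also have "\<dots> = (\<Sum>j<n. \<bar>A i j\<bar>) * mnorm n B" by (simp add: sum_distrib_right)
  also have "\<dots> \<le> mnorm n A * mnorm n B"
    by (intro mult_right_mono row_le_mnorm i mnorm_nonneg)
  finally show "(\<Sum>k<n. \<bar>matmul n A B i k\<bar>) \<le> mnorm n A * mnorm n B" .
qed

lemma mnorm_id: "mnorm n (matpow n M 0) \<le> 1"
proof (rule mnorm_le)
  fix i assume i: "i < n"
  have "(\<Sum>k<n. \<bar>matpow n M 0 i k\<bar>) = (\<Sum>k<n. if i = k then 1 else 0)"
    by (intro sum.cong) auto
  also have "\<dots> = 1" using i by (simp add: sum.delta)
  finally show "(\<Sum>k<n. \<bar>matpow n M 0 i k\<bar>) \<le> 1" by simp
qed simp

lemma mnorm_pow2k: "mnorm n (matpow n M (2 * k)) \<le> (mnorm n (matpow n M 2)) ^ k"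
proof (induction k)
  case 0
  then show ?case using mnorm_id by simp
next
  case (Suc k)
  have "mnorm n (matpow n M (2 * Suc k)) = mnorm n (matmul n (matpow n M (2 * k)) (matpow n M 2))"
    by (rule mnorm_cong) (use matpow_add[of _ n _ M "2 * k" 2] in simp)
  also have "\<dots> \<le> mnorm n (matpow n M (2 * k)) * mnorm n (matpow n M 2)" by (rule mnorm_mul)
  also have "\<dots> \<le> (mnorm n (matpow n M 2)) ^ k * mnorm n (matpow n M 2)"
    by (intro mult_right_mono Suc.IH mnorm_nonneg)
  finally show ?case by (simp add: mult.commute)
qed

context cnet begin

lemma e_nonneg: "0 \<le> e t i" by simp

lemma part1: "dTV p (law n E w r alpha t) \<le> real n * mnorm n (matpow n (AW alpha w) t)"
proof -
  let ?Q = "matpow n (AW alpha w) t"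
  have "dTV p (law n E w r alpha t) \<le> (\<Sum>i<n. e t i)" by (rule dTV_bound)
  also have "\<dots> \<le> (\<Sum>i<n. mnorm n ?Q)"
  proof (rule sum_mono)
    fix i assume i: "i \<in> {..<n}"
    have "e t i \<le> (\<Sum>k<n. ?Q i k * e 0 k)" using e_bound i by simp
    also have "\<dots> \<le> (\<Sum>k<n. \<bar>?Q i k\<bar>)"
    proof (rule sum_mono)
      fix k
      have "?Q i k * e 0 k \<le> \<bar>?Q i k\<bar> * e 0 k" by (intro mult_right_mono) auto
      also have "\<dots> \<le> \<bar>?Q i k\<bar> * 1" by (intro mult_left_mono) auto
      finally show "?Q i k * e 0 k \<le> \<bar>?Q i k\<bar>" by simp
    qed
    also have "\<dots> \<le> mnorm n ?Q" using i by (intro row_le_mnorm) auto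
    finally show "e t i \<le> mnorm n ?Q" .
  qed
  also have "\<dots> = real n * mnorm n ?Q" by simp
  finally show ?thesis .
qed

lemma part2:
  assumes hp: "\<forall>k. has_path E k \<longrightarrow> k \<le> d"
  shows "dTV p (law n E w r alpha d) \<le> 0"
proof -
  let ?Q = "matpow n (AW alpha w) d"
  have z: "?Q i k * e 0 k = 0" if i: "i < n" and k: "k < n" for i k
  proof (cases "din E k = {}")
    case True
    then show ?thesis using e0_princ[OF k] by simp
  next
    case False
    then obtain m where m: "(m, k) \<in> E" unfolding din_def by auto
    have "?Q i k = 0"
    proof (rule ccontr)
      assume "?Q i k \<noteq> 0"
      then obtain q where q: "length q = Suc d" "q ! 0 = k" "q ! d = i" "\<forall>s<d. (q ! s, q ! Suc s) \<in> E"
        using walk[OF i k] by blast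
      have "has_path E (Suc d)"
        unfolding has_path_def
      proof (intro exI[of _ "m # q"] conjI allI impI)
        show "length (m # q) = Suc (Suc d)" using q by simp
        fix s assume s: "s < Suc d"
        show "((m # q) ! s, (m # q) ! Suc s) \<in> E"
        proof (cases s)
          case 0
          then show ?thesis using m q by simp
        next
          case (Suc s')
          then show ?thesis using q s by simp
        qed
      qed
      then show False using hp by fastforce
    qed
    then show ?thesis by simp
  qed
  have "dTV p (law n E w r alpha d) \<le> (\<Sum>i<n. e d i)" by (rule dTV_bound)
  also have "\<dots> \<le> (\<Sum>i<n. (0::real))"
  proof (rule sum_mono)
    fix i assume i: "i \<in> {..<n}"
    have "e d i \<le> (\<Sum>k<n. ?Q i k * e 0 k)" using e_bound i by simp
    also have "\<dots> = 0" using z i by (intro sum.neutral) auto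
    finally show "e d i \<le> 0" .
  qed
  finally show ?thesis by simp
qed

lemma AW_row: "j < n \<Longrightarrow> (\<Sum>k<n. AW alpha w j k) = (if din E j = {} then 0 else alpha j)"
proof -
  assume j: "j < n"
  have "(\<Sum>k<n. AW alpha w j k) = alpha j * (\<Sum>k<n. w j k)" by (simp add: AW_def sum_distrib_left)
  also have "(\<Sum>k<n. w j k) = (\<Sum>k\<in>din E j. w j k)"
    by (rule sum.mono_neutral_right) (use din_sub w_zero j in \<open>auto simp: din_def\<close>)
  finally show ?thesis using w_sum[OF j] by auto
qed

lemma q_lt1: "mnorm n (matpow n (AW alpha w) 2) < 1"
proof (rule mnorm_lt)
  let ?M = "AW alpha w"
  fix i assume i: "i < n"
  have m2: "matpow n ?M 2 i k = (\<Sum>j<n. ?M i j * ?M j k)" if k: "k < n" for k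
    using matpow_Suc_left[OF i k, of ?M 1] matpow_one
    by (simp add: numeral_2_eq_2)
  have rho: "(\<Sum>k<n. ?M j k) \<le> 1" "0 \<le> (\<Sum>k<n. ?M j k)" if "j < n" for j
    using AW_row[OF that] alpha_range[OF that] by auto
  have rho1: "(\<Sum>k<n. ?M j k) < 1" if "j < n" "?M i j \<noteq> 0" for j
  proof -
    have "(j, i) \<in> E" using that w_zero[OF i] unfolding AW_def by auto
    then have "alpha j < 1" by (rule alpha_lt1)
    then show ?thesis using AW_row[OF that(1)] by auto
  qed
  have "(\<Sum>k<n. \<bar>matpow n ?M 2 i k\<bar>) = (\<Sum>k<n. \<Sum>j<n. ?M i j * ?M j k)"
  proof (intro sum.cong refl)
    fix k assume k: "k \<in> {..<n}"
    have "0 \<le> (\<Sum>j<n. ?M i j * ?M j k)"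
      by (intro sum_nonneg mult_nonneg_nonneg AW_nonneg) (use i k in auto)
    then show "\<bar>matpow n ?M 2 i k\<bar> = (\<Sum>j<n. ?M i j * ?M j k)" using m2 k by simp
  qed
  also have "\<dots> = (\<Sum>j<n. \<Sum>k<n. ?M i j * ?M j k)" by (rule sum.swap)
  also have "\<dots> = (\<Sum>j<n. ?M i j * (\<Sum>k<n. ?M j k))" by (simp only: sum_distrib_left)
  also have "\<dots> < 1"
  proof (cases "\<exists>j<n. ?M i j \<noteq> 0")
    case True
    then obtain j0 where j0: "j0 < n" "?M i j0 \<noteq> 0" by blast
    have "(\<Sum>j<n. ?M i j * (\<Sum>k<n. ?M j k)) < (\<Sum>j<n. ?M i j)"
    proof (rule sum_strict_mono_ex1)
      show "finite {..<n}" by simp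
      show "\<forall>j\<in>{..<n}. ?M i j * (\<Sum>k<n. ?M j k) \<le> ?M i j"
        using rho AW_nonneg i by (auto intro!: mult_left_le)
      show "\<exists>j\<in>{..<n}. ?M i j * (\<Sum>k<n. ?M j k) < ?M i j"
      proof (intro bexI[of _ j0])
        have "0 < ?M i j0" using AW_nonneg[OF i j0(1)] j0(2) by simp
        then show "?M i j0 * (\<Sum>k<n. ?M j0 k) < ?M i j0"
          using rho1[OF j0] by (simp add: mult_less_cancel_left1)
      qed (use j0 in simp)
    qed
    also have "\<dots> \<le> 1" using rho[OF i] by simp
    finally show ?thesis .
  next
    case False
    then show ?thesis by simp
  qed
  finally show "(\<Sum>k<n. \<bar>matpow n ?M 2 i k\<bar>) < 1" .
qed simp


lemma tmix_le: "dTV p (law n E w r alpha t) \<le> eps \<Longrightarrow> tmix p (law n E w r alpha) eps \<le> ereal (real t)"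
  unfolding tmix_def by (rule Inf_lower) auto

lemma part3:
  assumes eps: "0 < eps" "eps \<le> real n"
  shows "tmix p (law n E w r alpha) eps \<le> ereal (2 + 2 / (1 - mnorm n (matpow n (AW alpha w) 2)) * ln (real n / eps))"
proof -
  define q where "q = mnorm n (matpow n (AW alpha w) 2)"
  define L where "L = ln (real n / eps)"
  define x where "x = L / (1 - q)"
  define k where "k = nat \<lceil>x\<rceil>"
  have q: "0 \<le> q" "q < 1" unfolding q_def using mnorm_nonneg q_lt1 by auto
  have npos: "0 < real n" using eps by simp
  have L: "0 \<le> L" unfolding L_def using eps by simp
  have x: "0 \<le> x" unfolding x_def using L q by simp
  have kx: "x \<le> real k" "real k \<le> x + 1" unfolding k_def using x
    by (simp_all add: real_nat_ceiling_ge)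
  have "q ^ k \<le> exp (q - 1) ^ k"
    by (intro power_mono) (use q exp_ge_add_one_self[of "q - 1"] in auto)
  also have "\<dots> = exp ((q - 1) * real k)" by (simp add: exp_of_nat_mult[symmetric] mult.commute)
  also have "\<dots> \<le> exp ((q - 1) * x)"
    using kx q by (intro exp_le_cancel_iff[THEN iffD2] mult_left_mono_neg) auto
  also have "(q - 1) * x = - L" unfolding x_def using q by (simp add: field_simps)
  also have "exp (- L) = eps / real n" unfolding L_def using eps npos by (simp add: exp_minus exp_diff)
  finally have qk: "q ^ k \<le> eps / real n" .
  have "dTV p (law n E w r alpha (2 * k)) \<le> real n * mnorm n (matpow n (AW alpha w) (2 * k))"
    by (rule part1)
  also have "\<dots> \<le> real n * q ^ k" unfolding q_def
    by (intro mult_left_mono mnorm_pow2k) auto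
  also have "\<dots> \<le> real n * (eps / real n)" by (intro mult_left_mono qk) auto
  also have "\<dots> = eps" using npos by simp
  finally have "tmix p (law n E w r alpha) eps \<le> ereal (real (2 * k))" by (rule tmix_le)
  also have "real (2 * k) \<le> 2 + 2 / (1 - q) * L"
  proof -
    have "2 / (1 - q) * L = 2 * x" unfolding x_def by simp
    then show ?thesis using kx by simp
  qed
  then have "ereal (real (2 * k)) \<le> ereal (2 + 2 / (1 - q) * L)" by simp
  finally show ?thesis unfolding q_def L_def .
qed

end

theorem mainTheorem11:
  fixes n :: nat and E :: "(nat \<times> nat) set" and w :: "nat \<Rightarrow> nat \<Rightarrow> real"
    and r alpha :: "nat \<Rightarrow> real" and \<pi> :: "(nat \<Rightarrow> bool) pmf"
  assumes "contractor_network n E w r alpha"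
    and "stationary n E w r alpha \<pi>"
  shows "(\<forall>t. dTV \<pi> (law n E w r alpha t) \<le> real n * mnorm n (matpow n (AW alpha w) t))
    \<and> (\<forall>d. acyclic E \<and> d > 0 \<and> has_path E d \<and> (\<forall>k. has_path E k \<longrightarrow> k \<le> d) \<longrightarrow>
           (\<forall>eps > 0. tmix \<pi> (law n E w r alpha) eps \<le> ereal (real d)))
    \<and> (\<forall>eps. 0 < eps \<and> eps \<le> real n \<longrightarrow>
           tmix \<pi> (law n E w r alpha) eps
             \<le> ereal (2 + 2 / (1 - mnorm n (matpow n (AW alpha w) 2)) * ln (real n / eps)))"
proof -
  interpret cnet n E w r alpha \<pi> using assms by unfold_locales
  show ?thesis
  proof (intro conjI allI impI)
    fix t show "dTV \<pi> (law n E w r alpha t) \<le> real n * mnorm n (matpow n (AW alpha w) t)"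
      by (rule part1)
  next
    fix d :: nat and eps :: real
    assume h: "acyclic E \<and> d > 0 \<and> has_path E d \<and> (\<forall>k. has_path E k \<longrightarrow> k \<le> d)" and eps: "eps > 0"
    have "dTV \<pi> (law n E w r alpha d) \<le> eps" using part2[of d] h eps by force
    then show "tmix \<pi> (law n E w r alpha) eps \<le> ereal (real d)" by (rule tmix_le)
  next
    fix eps :: real assume "0 < eps \<and> eps \<le> real n"
    then show "tmix \<pi> (law n E w r alpha) eps
             \<le> ereal (2 + 2 / (1 - mnorm n (matpow n (AW alpha w) 2)) * ln (real n / eps))"
      using part3 by blast
  qed
qed

end
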